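(* Let $C$ be a linear completely regular $[n,k,2]_q$ code with covering radius $\rho=1$, and let $n_a$ be the number of codewords at distance one from any vector not in $C$. If $k<n-1$, then the set of coordinate positions $\{1,\dots,n\}$ can be partitioned into sets $X_1,\dots,X_{n/n_a}$, each of size $n_a$, such that every codeword of weight $2$ has its support contained in one of these sets.
   Context: Hamming distance; support of a vector = set of its nonzero coordinates; covering radius $\rho=\max_{\bf v}\min_{{\bf x}\in C}d({\bf v},{\bf x})$. $C$ is completely regular if for every vector ${\bf x}$, with $t=d({\bf x},C)$, the number of codewords at distance $i$ from ${\bf x}$ depends only on $t$ and $i$ (so $n_a$ is well defined). *)

theory Defs
  imports Main
begin

text \<open>Vectors of length n over a finite field 'a: functions nat => 'a vanishing
  outside the coordinate positions {0..<n} (positions 1..n of the paper).\<close>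

definition vecs :: "nat \<Rightarrow> (nat \<Rightarrow> 'a::zero) set" where
  "vecs n = {v. \<forall>i. n \<le> i \<longrightarrow> v i = 0}"

definition supp :: "(nat \<Rightarrow> 'a::zero) \<Rightarrow> nat set" where
  "supp v = {i. v i \<noteq> 0}"

definition hdist :: "(nat \<Rightarrow> 'a) \<Rightarrow> (nat \<Rightarrow> 'a) \<Rightarrow> nat" where
  "hdist v w = card {i. v i \<noteq> w i}"

definition weight :: "(nat \<Rightarrow> 'a::zero) \<Rightarrow> nat" where
  "weight v = card (supp v)"

definition linear_code :: "nat \<Rightarrow> nat \<Rightarrow> (nat \<Rightarrow> 'a::{finite,field}) set \<Rightarrow> bool" where
  "linear_code n k C \<longleftrightarrow> C \<subseteq> vecs n \<and> (\<lambda>_. 0) \<in> C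
     \<and> (\<forall>u\<in>C. \<forall>v\<in>C. (\<lambda>i. u i + v i) \<in> C)
     \<and> (\<forall>a. \<forall>v\<in>C. (\<lambda>i. a * v i) \<in> C)
     \<and> card C = card (UNIV :: 'a set) ^ k"

definition min_distance :: "(nat \<Rightarrow> 'a) set \<Rightarrow> nat \<Rightarrow> bool" where
  "min_distance C d \<longleftrightarrow> (\<exists>u\<in>C. \<exists>v\<in>C. u \<noteq> v \<and> hdist u v = d)
     \<and> (\<forall>u\<in>C. \<forall>v\<in>C. u \<noteq> v \<longrightarrow> d \<le> hdist u v)"

definition dist_code :: "(nat \<Rightarrow> 'a) \<Rightarrow> (nat \<Rightarrow> 'a) set \<Rightarrow> nat" where
  "dist_code x C = Min (hdist x ` C)"

definition covering_radius :: "nat \<Rightarrow> (nat \<Rightarrow> 'a::zero) set \<Rightarrow> nat" where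
  "covering_radius n C = Max ((\<lambda>v. dist_code v C) ` vecs n)"

definition completely_regular :: "nat \<Rightarrow> (nat \<Rightarrow> 'a::zero) set \<Rightarrow> bool" where
  "completely_regular n C \<longleftrightarrow>
     (\<forall>x\<in>vecs n. \<forall>y\<in>vecs n. dist_code x C = dist_code y C \<longrightarrow>
        (\<forall>i. card {c\<in>C. hdist x c = i} = card {c\<in>C. hdist y c = i}))"

end

theory Submission
  imports Defs
begin

theorem lemma3p6:
  fixes C :: "(nat \<Rightarrow> 'a::{finite,field}) set" and n k na :: nat
  assumes "linear_code n k C"
    and "min_distance C 2"
    and "completely_regular n C"
    and "covering_radius n C = 1"
    and "\<forall>x\<in>vecs n. x \<notin> C \<longrightarrow> card {c\<in>C. hdist x c = 1} = na"
    and "k < n - 1"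
  shows "\<exists>P. P \<subseteq> Pow {0..<n} \<and> \<Union>P = {0..<n}
           \<and> (\<forall>X\<in>P. \<forall>Y\<in>P. X \<noteq> Y \<longrightarrow> X \<inter> Y = {})
           \<and> (\<forall>X\<in>P. card X = na)
           \<and> card P * na = n
           \<and> (\<forall>c\<in>C. weight c = 2 \<longrightarrow> (\<exists>X\<in>P. supp c \<subseteq> X))"
proof -
  from assms(1) have Cv: "C \<subseteq> vecs n" and C0: "(\<lambda>_. 0) \<in> C"
    and Cadd: "\<And>u v. u\<in>C \<Longrightarrow> v\<in>C \<Longrightarrow> (\<lambda>i. u i + v i) \<in> C"
    and Csc: "\<And>a v. v\<in>C \<Longrightarrow> (\<lambda>i. a * v i) \<in> C"
    unfolding linear_code_def by auto
  have md: "2 \<le> hdist u v" if "u\<in>C" "v\<in>C" "u \<noteq> v" for u v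
    using assms(2) that unfolding min_distance_def by auto
  have uniq: "u = v" if u: "u\<in>C" and v: "v\<in>C" and s: "{m. u m \<noteq> v m} \<subseteq> {m0}" for u v m0
  proof (rule ccontr)
    assume ne: "u \<noteq> v"
    have "card {m. u m \<noteq> v m} \<le> 1" using card_mono[OF _ s] by simp
    with md[OF u v ne] show False unfolding hdist_def by simp
  qed
  have supp_lt: "m < n" if "c \<in> C" "m \<in> supp c" for c m
    using that Cv unfolding vecs_def supp_def by (auto simp: subset_iff) (meson not_less)
  have suppI: "\<And>m. (c m \<noteq> 0) = (m = i \<or> m = j)" if "supp c = {i,j}" for c :: "nat \<Rightarrow> 'a" and i j
    using that unfolding supp_def by (auto simp: set_eq_iff)
  have trans2: "\<exists>e\<in>C. supp e = {i,l}"
    if c: "c\<in>C" "supp c = {i,j}" and d: "d\<in>C" "supp d = {j,l}"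
      and ij: "i\<noteq>j" and jl: "j\<noteq>l" and il: "i\<noteq>l" for c d i j l
  proof -
    define t where "t = - (c j / d j)"
    define e where "e = (\<lambda>m. c m + t * d m)"
    have eC: "e \<in> C" unfolding e_def using Cadd[OF c(1) Csc[OF d(1)]] by simp
    have cs: "\<And>m. (c m \<noteq> 0) = (m = i \<or> m = j)" using suppI[OF c(2)] .
    have ds: "\<And>m. (d m \<noteq> 0) = (m = j \<or> m = l)" using suppI[OF d(2)] .
    have t0: "t \<noteq> 0" using cs[of j] ds[of j] by (simp add: t_def)
    have "supp e = {i,l}"
    proof -
      have "(e m \<noteq> 0) = (m = i \<or> m = l)" for m
      proof -
        consider "m = i" | "m = j" | "m = l" | "m \<noteq> i \<and> m \<noteq> j \<and> m \<noteq> l" by blast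
        then show ?thesis
        proof cases
          case 1 then show ?thesis using cs[of i] ds[of i] ij il by (simp add: e_def)
        next
          case 2 then show ?thesis using cs[of j] ds[of j] ij jl by (simp add: e_def t_def)
        next
          case 3 then show ?thesis using cs[of l] ds[of l] t0 jl il by (simp add: e_def)
        next
          case 4 then show ?thesis using cs[of m] ds[of m] by (simp add: e_def)
        qed
      qed
      then show ?thesis unfolding supp_def by auto
    qed
    with eC show ?thesis by blast
  qed
  define rel where "rel i j \<longleftrightarrow> i = j \<or> (\<exists>c\<in>C. supp c = {i,j})" for i j
  define cls where "cls i = {j. j < n \<and> rel i j}" for i
  have rel_sym: "rel j i" if "rel i j" for i j
    using that by (auto simp: rel_def insert_commute)
  have rel_trans: "rel i l" if "rel i j" "rel j l" for i j l
  proof (cases "i = j \<or> j = l \<or> i = l")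
    case True then show ?thesis using that by (auto simp: rel_def)
  next
    case False
    then show ?thesis using that trans2 unfolding rel_def by metis
  qed
  have cls_sub: "cls i \<subseteq> {0..<n}" for i unfolding cls_def by auto
  have cls_self: "i \<in> cls i" if "i < n" for i using that unfolding cls_def rel_def by auto
  have cls_eq: "cls j = cls i" if "j \<in> cls i" for i j
  proof -
    have r: "rel i j" using that unfolding cls_def by auto
    show ?thesis unfolding cls_def using r rel_sym rel_trans by blast
  qed
  have finC: "finite C"
  proof (rule ccontr)
    assume "infinite C"
    then have "card C = 0" by simp
    with assms(1) show False unfolding linear_code_def by simp
  qed
  have cls_card: "card (cls i) = na" if i: "i < n" for i
  proof -
    define x where "x = (\<lambda>m. if m = i then (1::'a) else 0)"
    have xv: "x \<in> vecs n" using i unfolding x_def vecs_def by auto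
    have xC: "x \<notin> C"
    proof
      assume "x \<in> C"
      then have "x = (\<lambda>_. 0)" using uniq[OF _ C0, of x i] by (auto simp: x_def)
      then show False by (metis one_neq_zero x_def)
    qed
    define S where "S = {c\<in>C. hdist x c = 1}"
    have cS: "card S = na" using assms(5) xv xC unfolding S_def by auto
    define g where "g j = (if j = i then (\<lambda>_. 0) else (SOME c. c \<in> C \<and> supp c = {i,j} \<and> c i = 1))" for j
    have gex: "g j \<in> C \<and> supp (g j) = {i,j} \<and> g j i = 1" if "j \<in> cls i" "j \<noteq> i" for j
    proof -
      from that obtain c where c: "c \<in> C" "supp c = {i,j}" unfolding cls_def rel_def by auto
      have ci: "c i \<noteq> 0" using suppI[OF c(2)] by simp
      define c' where "c' = (\<lambda>m. (1 / c i) * c m)"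
      have "c' \<in> C" unfolding c'_def using Csc[OF c(1)] .
      moreover have "supp c' = {i,j}" using c(2) ci unfolding c'_def supp_def by auto
      moreover have "c' i = 1" using ci unfolding c'_def by simp
      ultimately have "\<exists>c. c \<in> C \<and> supp c = {i,j} \<and> c i = 1" by blast
      from someI_ex[OF this] show ?thesis unfolding g_def using that(2) by simp
    qed
    have supp0: "supp (\<lambda>_. 0::'a) = {}" unfolding supp_def by simp
    have inj: "inj_on g (cls i)"
    proof
      fix a b assume a: "a \<in> cls i" and b: "b \<in> cls i" and e: "g a = g b"
      show "a = b"
      proof (cases "a = i")
        case True
        then show ?thesis using gex[OF b] e supp0 by (cases "b = i") (auto simp: g_def)
      next
        case False
        then have sa: "supp (g a) = {i,a}" using gex[OF a] by simp
        show ?thesis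
        proof (cases "b = i")
          case True then show ?thesis using sa e supp0 by (simp add: g_def)
        next
          case False
          then have "supp (g b) = {i,b}" using gex[OF b] by simp
          with sa e \<open>a \<noteq> i\<close> False show ?thesis by (auto simp: doubleton_eq_iff)
        qed
      qed
    qed
    have img: "g ` cls i = S"
    proof
      show "g ` cls i \<subseteq> S"
      proof
        fix c assume "c \<in> g ` cls i"
        then obtain j where j: "j \<in> cls i" and cj: "c = g j" by auto
        show "c \<in> S"
        proof (cases "j = i")
          case True
          then have "c = (\<lambda>_. 0)" using cj by (simp add: g_def)
          moreover have "{m. x m \<noteq> 0} = {i}" unfolding x_def by auto
          ultimately show ?thesis using C0 unfolding S_def hdist_def by simp
        next
          case False
          have g: "g j \<in> C" "supp (g j) = {i,j}" "g j i = 1" using gex[OF j False] by auto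
          have gs: "\<And>m. (g j m \<noteq> 0) = (m = i \<or> m = j)" using suppI[OF g(2)] .
          have "{m. x m \<noteq> c m} = {j}"
          proof -
            have "(x m \<noteq> c m) = (m = j)" for m
              using gs[of m] g(3) False cj unfolding x_def by (cases "m = i") auto
            then show ?thesis by auto
          qed
          then show ?thesis using g(1) cj unfolding S_def hdist_def by simp
        qed
      qed
    next
      show "S \<subseteq> g ` cls i"
      proof
        fix c assume "c \<in> S"
        then have cC: "c \<in> C" and h: "card {m. x m \<noteq> c m} = 1" unfolding S_def hdist_def by auto
        then obtain m0 where m0: "{m. x m \<noteq> c m} = {m0}" using card_1_singletonE by blast
        have mem: "(x m \<noteq> c m) = (m = m0)" for m using m0 by (simp add: set_eq_iff)
        show "c \<in> g ` cls i"
        proof (cases "m0 = i")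
          case True
          have "c = (\<lambda>_. 0)"
          proof (rule uniq[OF cC C0, of i])
            show "{m. c m \<noteq> 0} \<subseteq> {i}"
            proof
              fix m assume "m \<in> {m. c m \<noteq> 0}"
              then have cm: "c m \<noteq> 0" by simp
              show "m \<in> {i}"
              proof (rule ccontr)
                assume "m \<notin> {i}"
                then have "m \<noteq> i" by simp
                with mem[of m] True have "x m = c m" by simp
                with \<open>m \<noteq> i\<close> cm show False by (simp add: x_def)
              qed
            qed
          qed
          moreover have "g i = (\<lambda>_. 0)" by (simp add: g_def)
          ultimately show ?thesis using cls_self[OF i] by (metis image_eqI)
        next
          case False
          have cv0: "c m = 0" if "m \<noteq> i" "m \<noteq> m0" for m
          proof -
            have "x m = c m" using mem[of m] that(2) by simp
            with that(1) show ?thesis by (simp add: x_def)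
          qed
          have cvi: "c i = 1"
          proof -
            have "x i = c i" using mem[of i] False by simp
            then show ?thesis by (simp add: x_def)
          qed
          have cm0: "c m0 \<noteq> 0"
          proof -
            have "x m0 \<noteq> c m0" using mem[of m0] by simp
            with False show ?thesis by (simp add: x_def)
          qed
          have sc: "supp c = {i,m0}"
          proof -
            have "(c m \<noteq> 0) = (m = i \<or> m = m0)" for m
              using cv0[of m] cvi cm0 by (cases "m = i"; cases "m = m0") auto
            then show ?thesis unfolding supp_def by auto
          qed
          have m0n: "m0 < n" using supp_lt[OF cC] sc by auto
          have mc: "m0 \<in> cls i" unfolding cls_def rel_def using m0n cC sc by auto
          have g: "g m0 \<in> C" "supp (g m0) = {i,m0}" "g m0 i = 1" using gex[OF mc] False by auto
          have gs: "\<And>m. (g m0 m \<noteq> 0) = (m = i \<or> m = m0)" using suppI[OF g(2)] .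
          have "c = g m0"
          proof (rule uniq[OF cC g(1), of m0])
            show "{m. c m \<noteq> g m0 m} \<subseteq> {m0}"
            proof
              fix m assume "m \<in> {m. c m \<noteq> g m0 m}"
              then have "c m \<noteq> g m0 m" by simp
              then show "m \<in> {m0}" using gs[of m] g(3) cvi cv0[of m] by (cases "m = i") auto
            qed
          qed
          then show ?thesis using mc by blast
        qed
      qed
    qed
    have "card (cls i) = card S" using card_image[OF inj] img by simp
    with cS show ?thesis by simp
  qed
  define P where "P = cls ` {0..<n}"
  have P1: "P \<subseteq> Pow {0..<n}" unfolding P_def using cls_sub by auto
  have P2: "\<Union>P = {0..<n}" unfolding P_def using cls_sub cls_self by fastforce
  have P3: "\<forall>X\<in>P. \<forall>Y\<in>P. X \<noteq> Y \<longrightarrow> X \<inter> Y = {}"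
  proof (intro ballI impI)
    fix X Y assume "X \<in> P" "Y \<in> P" "X \<noteq> Y"
    then obtain a b where X: "X = cls a" and Y: "Y = cls b" unfolding P_def by auto
    show "X \<inter> Y = {}"
    proof (rule ccontr)
      assume "X \<inter> Y \<noteq> {}"
      then obtain m where "m \<in> cls a" "m \<in> cls b" using X Y by auto
      then have "cls a = cls b" using cls_eq by metis
      with X Y \<open>X \<noteq> Y\<close> show False by simp
    qed
  qed
  have P4: "\<forall>X\<in>P. card X = na" unfolding P_def using cls_card by auto
  have P5: "card P * na = n"
  proof -
    have "card (\<Union>P) = sum card P"
      by (rule card_Union_disjoint) (use P3 P1 in \<open>auto simp: pairwise_def disjnt_def intro: finite_subset[of _ "{0..<n}"]\<close>)
    also have "\<dots> = sum (\<lambda>_. na) P" using P4 by simp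
    also have "\<dots> = card P * na" by simp
    finally show ?thesis using P2 by simp
  qed
  have P6: "\<forall>c\<in>C. weight c = 2 \<longrightarrow> (\<exists>X\<in>P. supp c \<subseteq> X)"
  proof (intro ballI impI)
    fix c assume cC: "c \<in> C" and w: "weight c = 2"
    then obtain a b where ab: "supp c = {a,b}" "a \<noteq> b" unfolding weight_def by (meson card_2_iff)
    have "a < n" "b < n" using supp_lt[OF cC] ab by auto
    then have "supp c \<subseteq> cls a" using ab cC unfolding cls_def rel_def by auto
    moreover have "cls a \<in> P" using \<open>a < n\<close> unfolding P_def by auto
    ultimately show "\<exists>X\<in>P. supp c \<subseteq> X" by blast
  qed
  show ?thesis using P1 P2 P3 P4 P5 P6 by blast
qed

end
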